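(* Let $(\gamma_j)_{j\ge1}$ be a sequence with $1\ge\gamma_1\ge\gamma_2\ge\cdots\ge0$ and product weights $\gamma_{\mathfrak u}=\prod_{j\in\mathfrak u}\gamma_j$, and assume there is $c>0$ with $\gamma_j\ge c$ for all $j\in\mathbb N$. Then for all $\varepsilon\in(0,1)$ and all $d\in\mathbb N$, $N_{\boldsymbol\gamma}(\varepsilon,d)\ge\left(\frac{c}{4\varepsilon}\right)^d$. In particular, the $\boldsymbol\gamma$-weighted star discrepancy of the centered regular grid suffers from the curse of dimensionality (and this holds in particular for the classical star discrepancy, i.e. $\gamma_j=1$ for all $j$).
   Context: Write $[d]=\{1,\dots,d\}$. For $m_1,\dots,m_d\in\mathbb N$ the centered regular grid is $\Gamma_{m_1,\dots,m_d}=\{(\frac{2\ell_1+1}{2m_1},\dots,\frac{2\ell_d+1}{2m_d}) : \ell_j\in\{0,\dots,m_j-1\}\}$, with $N=m_1\cdots m_d$ points. For an $N$-point set $\mathcal P_d\subset[0,1)^d$ with real coefficients $\mathcal A(\mathcal P_d)=\{a_{\boldsymbol x}\}$, the local discrepancy is $\Delta_{\mathcal P_d,\mathcal A(\mathcal P_d)}(\boldsymbol\alpha)=\sum_{\boldsymbol x\in\mathcal P_d}a_{\boldsymbol x}\mathbf 1_{[\boldsymbol 0,\boldsymbol\alpha)}(\boldsymbol x)-\prod_{j=1}^d\alpha_j$, $\boldsymbol\alpha\in[0,1]^d$, and the $\boldsymbol\gamma$-weighted star discrepancy is $D^*_{N,\boldsymbol\gamma}(\mathcal P_d,\mathcal A(\mathcal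 P_d))=\sup_{\boldsymbol\alpha\in[0,1]^d}\max_{\emptyset\ne\mathfrak u\subseteq[d]}\gamma_{\mathfrak u}|\Delta_{\mathcal P_d,\mathcal A(\mathcal P_d)}((\boldsymbol\alpha_{\mathfrak u},\boldsymbol 1))|$, where $(\boldsymbol\alpha_{\mathfrak u},\boldsymbol 1)$ has $j$-th coordinate $\alpha_j$ for $j\in\mathfrak u$ and $1$ otherwise. For $\varepsilon\in(0,1)$, $d\in\mathbb N$, $N_{\boldsymbol\gamma}(\varepsilon,d)=\min\{N: N=m_1\cdots m_d \text{ and there exist coefficients } \mathcal A(\Gamma_{m_1,\dots,m_d}) \text{ with } D^*_{N,\boldsymbol\gamma}(\Gamma_{m_1,\dots,m_d},\mathcal A(\Gamma_{m_1,\dots,m_d}))\le\varepsilon\}$. The discrepancy suffers from the curse of dimensionality if there exist $C,\varepsilon_0,\tau>0$ with $N_{\boldsymbol\gamma}(\varepsilon,d)\ge C(1+\tau)^d$ for all $\varepsilon\le\varepsilon_0$ and infinitely many $d\in\mathbb N$. *)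

theory Defs
  imports Complex_Main
begin

text \<open>Points of [0,1)^d are modelled as functions nat => real; coordinates are
  indexed by {1..d}, and all other coordinates are 0.\<close>

definition centered_grid :: "nat \<Rightarrow> (nat \<Rightarrow> nat) \<Rightarrow> (nat \<Rightarrow> real) set" where
  "centered_grid d m = {x. (\<forall>j\<in>{1..d}. \<exists>l<m j. x j = (2 * real l + 1) / (2 * real (m j)))
                          \<and> (\<forall>j. j \<notin> {1..d} \<longrightarrow> x j = 0)}"

definition local_disc ::
  "nat \<Rightarrow> (nat \<Rightarrow> real) set \<Rightarrow> ((nat \<Rightarrow> real) \<Rightarrow> real) \<Rightarrow> (nat \<Rightarrow> real) \<Rightarrow> real" where
  "local_disc d P a \<alpha> =
     (\<Sum>x\<in>P. a x * (if (\<forall>j\<in>{1..d}. 0 \<le> x j \<and> x j < \<alpha> j) then 1 else 0))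
     - (\<Prod>j\<in>{1..d}. \<alpha> j)"

definition restr_one :: "nat set \<Rightarrow> (nat \<Rightarrow> real) \<Rightarrow> (nat \<Rightarrow> real)" where
  "restr_one u \<alpha> = (\<lambda>j. if j \<in> u then \<alpha> j else 1)"

definition weighted_star_disc ::
  "(nat set \<Rightarrow> real) \<Rightarrow> nat \<Rightarrow> (nat \<Rightarrow> real) set \<Rightarrow> ((nat \<Rightarrow> real) \<Rightarrow> real) \<Rightarrow> real" where
  "weighted_star_disc w d P a =
     Sup {w u * \<bar>local_disc d P a (restr_one u \<alpha>)\<bar> | u \<alpha>.
            u \<noteq> {} \<and> u \<subseteq> {1..d} \<and> (\<forall>j\<in>{1..d}. 0 \<le> \<alpha> j \<and> \<alpha> j \<le> 1)}"

definition product_weights :: "(nat \<Rightarrow> real) \<Rightarrow> nat set \<Rightarrow> real" where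
  "product_weights \<gamma> u = (\<Prod>j\<in>u. \<gamma> j)"

definition N_grid :: "(nat set \<Rightarrow> real) \<Rightarrow> real \<Rightarrow> nat \<Rightarrow> nat" where
  "N_grid w \<epsilon> d = Inf {N. \<exists>m. (\<forall>j\<in>{1..d}. 1 \<le> m j) \<and> N = (\<Prod>j\<in>{1..d}. m j) \<and>
         (\<exists>a. weighted_star_disc w d (centered_grid d m) a \<le> \<epsilon>)}"

definition curse_of_dim :: "(real \<Rightarrow> nat \<Rightarrow> nat) \<Rightarrow> bool" where
  "curse_of_dim Nf \<longleftrightarrow> (\<exists>C \<epsilon>0 \<tau>. C > 0 \<and> \<epsilon>0 > 0 \<and> \<tau> > 0 \<and>
      (\<forall>\<epsilon>. 0 < \<epsilon> \<and> \<epsilon> < 1 \<and> \<epsilon> \<le> \<epsilon>0 \<longrightarrow>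
         infinite {d::nat. d \<ge> 1 \<and> real (Nf \<epsilon> d) \<ge> C * (1 + \<tau>) ^ d}))"

end

theory Submission
  imports Defs "HOL-Library.FuncSet"
begin


lemma count_bound:
  fixes m :: nat and \<alpha> :: real
  assumes "m \<ge> 1" "0 \<le> \<alpha>" "\<alpha> \<le> 1"
  shows "\<bar>real (card {l. l < m \<and> (2 * real l + 1) / (2 * real m) < \<alpha>}) / real m - \<alpha>\<bar> \<le> 1 / (2 * real m)"
proof -
  define t where "t = real m * \<alpha> - 1/2"
  define k where "k = min m (nat \<lceil>t\<rceil>)"
  have mpos: "real m > 0" using assms by simp
  have iff: "(2 * real l + 1) / (2 * real m) < \<alpha> \<longleftrightarrow> real l < t" for l
    using mpos by (simp add: t_def field_simps)
  have "{l. l < m \<and> (2 * real l + 1) / (2 * real m) < \<alpha>} = {..<k}"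
  proof -
    have "l < m \<and> real l < t \<longleftrightarrow> l < k" for l
    proof -
      have "real l < t \<longleftrightarrow> int l < \<lceil>t\<rceil>" by (simp add: less_ceiling_iff)
      also have "\<dots> \<longleftrightarrow> l < nat \<lceil>t\<rceil>" by linarith
      finally show ?thesis unfolding k_def by auto
    qed
    then show ?thesis using iff by auto
  qed
  then have c: "card {l. l < m \<and> (2 * real l + 1) / (2 * real m) < \<alpha>} = k" by simp
  have "\<bar>real k - real m * \<alpha>\<bar> \<le> 1/2"
  proof (cases "nat \<lceil>t\<rceil> \<le> m")
    case True
    then have kk: "k = nat \<lceil>t\<rceil>" unfolding k_def by simp
    show ?thesis
    proof (cases "\<lceil>t\<rceil> \<ge> 0")
      case True
      then have "real k = of_int \<lceil>t\<rceil>" using kk by simp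
      moreover have "t \<le> of_int \<lceil>t\<rceil>" "of_int \<lceil>t\<rceil> < t + 1" by linarith+
      ultimately show ?thesis unfolding t_def by linarith
    next
      case False
      then have "k = 0" using kk by simp
      moreover have "t < 0" using False by linarith
      ultimately show ?thesis using assms mpos unfolding t_def by simp
    qed
  next
    case False
    then have "m \<le> nat \<lceil>t\<rceil>" by linarith
    then have "k = m" unfolding k_def by (rule min_absorb1)
    moreover have "t > real m - 1" using False by linarith
    moreover have "real m * \<alpha> \<le> real m" using assms(3) mpos by (simp add: mult_left_le)
    ultimately show ?thesis unfolding t_def by simp
  qed
  then have "\<bar>real k / real m - \<alpha>\<bar> \<le> 1 / (2 * real m)"
    using mpos by (simp add: field_simps abs_le_iff)
  then show ?thesis using c by simp
qed

lemma prod_diff_le: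
  fixes x y :: "'a \<Rightarrow> real"
  assumes "finite I" "\<And>i. i \<in> I \<Longrightarrow> 0 \<le> x i \<and> x i \<le> 1" "\<And>i. i \<in> I \<Longrightarrow> 0 \<le> y i \<and> y i \<le> 1"
  shows "\<bar>prod x I - prod y I\<bar> \<le> (\<Sum>i\<in>I. \<bar>x i - y i\<bar>)"
  using assms
proof (induction I rule: finite_induct)
  case empty then show ?case by simp
next
  case (insert a F)
  have px: "0 \<le> prod x F \<and> prod x F \<le> 1" using insert by (simp add: prod_nonneg prod_le_1)
  have py: "0 \<le> prod y F \<and> prod y F \<le> 1" using insert by (simp add: prod_nonneg prod_le_1)
  have IH: "\<bar>prod x F - prod y F\<bar> \<le> (\<Sum>i\<in>F. \<bar>x i - y i\<bar>)" using insert by simp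
  have xa: "0 \<le> x a \<and> x a \<le> 1" "0 \<le> y a \<and> y a \<le> 1" using insert by auto
  have "x a * prod x F - y a * prod y F = x a * (prod x F - prod y F) + (x a - y a) * prod y F"
    by (simp add: algebra_simps)
  then have "\<bar>x a * prod x F - y a * prod y F\<bar> \<le> \<bar>x a\<bar> * \<bar>prod x F - prod y F\<bar> + \<bar>x a - y a\<bar> * \<bar>prod y F\<bar>"
    by (metis abs_mult abs_triangle_ineq)
  also have "\<dots> \<le> \<bar>prod x F - prod y F\<bar> + \<bar>x a - y a\<bar>"
    using xa px py by (intro add_mono) (auto intro: mult_left_le_one_le mult_right_le_one_le)
  finally show ?case using insert IH by simp
qed



lemma grid_image:
  fixes d :: nat and m :: "nat \<Rightarrow> nat" and A :: "nat \<Rightarrow> nat set"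
  assumes "\<forall>j\<in>{1..d}. 1 \<le> m j"
  shows "{x. (\<forall>j\<in>{1..d}. \<exists>l\<in>A j. x j = (2*real l+1)/(2*real (m j))) \<and> (\<forall>j. j\<notin>{1..d} \<longrightarrow> x j = 0)}
     = (\<lambda>l. \<lambda>j. if j \<in> {1..d} then (2*real (l j)+1)/(2*real (m j)) else 0) ` PiE {1..d} A"
    (is "?L = ?\<phi> ` ?P")
  and "inj_on (\<lambda>l. \<lambda>j. if j \<in> {1..d} then (2*real (l j)+1)/(2*real (m j)) else 0) (PiE {1..d} A)"
proof -
  show "?L = ?\<phi> ` ?P"
  proof
    show "?L \<subseteq> ?\<phi> ` ?P"
    proof
      fix x assume x: "x \<in> ?L"
      define L where "L = restrict (\<lambda>j. SOME l. l \<in> A j \<and> x j = (2*real l+1)/(2*real (m j))) {1..d}"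
      have L: "L j \<in> A j \<and> x j = (2*real (L j)+1)/(2*real (m j))" if "j \<in> {1..d}" for j
      proof -
        from x that have "\<exists>l. l \<in> A j \<and> x j = (2*real l+1)/(2*real (m j))" by auto
        then have "(SOME l. l \<in> A j \<and> x j = (2*real l+1)/(2*real (m j))) \<in> A j \<and> x j = (2*real (SOME l. l \<in> A j \<and> x j = (2*real l+1)/(2*real (m j)))+1)/(2*real (m j))"
          by (rule someI_ex)
        then show ?thesis unfolding L_def using that by simp
      qed
      have "L \<in> ?P" unfolding L_def using L by (auto simp: L_def)
      moreover have "x = ?\<phi> L" using L x by (auto simp: fun_eq_iff)
      ultimately show "x \<in> ?\<phi> ` ?P" by blast
    qed
  next
    show "?\<phi> ` ?P \<subseteq> ?L" by auto
  qed
  show "inj_on ?\<phi> ?P"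
  proof (rule inj_onI)
    fix l l' assume l: "l \<in> ?P" and l': "l' \<in> ?P" and eq: "?\<phi> l = ?\<phi> l'"
    have "l j = l' j" if j: "j \<in> {1..d}" for j
    proof -
      have "1 \<le> m j" using assms j by blast
      then have mp: "real (m j) > 0" by simp
      from eq have "(2*real (l j)+1)/(2*real (m j)) = (2*real (l' j)+1)/(2*real (m j))"
        using j by (metis (no_types, lifting))
      then show ?thesis using mp by (simp add: field_simps)
    qed
    then show "l = l'" using l l' by (auto intro: PiE_ext)
  qed
qed


lemma grid_disc_small:
  fixes w :: "nat set \<Rightarrow> real" and d :: nat and \<epsilon> :: real
  assumes d: "d \<ge> 1" and eps: "\<epsilon> > 0"
    and w: "\<And>u. u \<subseteq> {1..d} \<Longrightarrow> 0 \<le> w u \<and> w u \<le> 1"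
  shows "\<exists>m a. (\<forall>j\<in>{1..d}. 1 \<le> m j) \<and> weighted_star_disc w d (centered_grid d m) a \<le> \<epsilon>"
proof -
  define M :: nat where "M = nat \<lceil>real d / \<epsilon>\<rceil> + 1"
  define m :: "nat \<Rightarrow> nat" where "m = (\<lambda>_. M)"
  define a :: "(nat \<Rightarrow> real) \<Rightarrow> real" where "a = (\<lambda>_. 1 / real M ^ d)"
  have M1: "M \<ge> 1" unfolding M_def by simp
  have Mpos: "real M > 0" using M1 by simp
  have "real d / \<epsilon> \<le> real M" unfolding M_def by linarith
  then have dM: "real d / (2 * real M) \<le> \<epsilon>" using eps Mpos by (simp add: field_simps)
  have m1: "\<forall>j\<in>{1..d}. 1 \<le> m j" using M1 by (simp add: m_def)
  define \<phi> where "\<phi> = (\<lambda>l::nat\<Rightarrow>nat. \<lambda>j. if j \<in> {1..d} then (2*real (l j)+1)/(2*real (m j)) else 0)"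
  have P: "centered_grid d m = \<phi> ` PiE {1..d} (\<lambda>_. {..<M})"
  proof -
    have "centered_grid d m = {x. (\<forall>j\<in>{1..d}. \<exists>l\<in>(\<lambda>_. {..<M}) j. x j = (2*real l+1)/(2*real (m j))) \<and> (\<forall>j. j\<notin>{1..d} \<longrightarrow> x j = 0)}"
      unfolding centered_grid_def m_def by auto
    also have "\<dots> = \<phi> ` PiE {1..d} (\<lambda>_. {..<M})" unfolding \<phi>_def by (rule grid_image(1)[OF m1])
    finally show ?thesis .
  qed
  have finP: "finite (centered_grid d m)" unfolding P by (intro finite_imageI finite_PiE) auto
  have bound: "w u * \<bar>local_disc d (centered_grid d m) a (restr_one u \<alpha>)\<bar> \<le> \<epsilon>"
    if u: "u \<noteq> {}" "u \<subseteq> {1..d}" and \<alpha>: "\<forall>j\<in>{1..d}. 0 \<le> \<alpha> j \<and> \<alpha> j \<le> 1" for u \<alpha>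
  proof -
    define \<beta> where "\<beta> = restr_one u \<alpha>"
    have \<beta>: "0 \<le> \<beta> j \<and> \<beta> j \<le> 1" if "j \<in> {1..d}" for j
      using \<alpha> that by (auto simp: \<beta>_def restr_one_def)
    define A where "A = (\<lambda>j. {l. l < M \<and> (2 * real l + 1) / (2 * real M) < \<beta> j})"
    define Q where "Q = {x \<in> centered_grid d m. \<forall>j\<in>{1..d}. 0 \<le> x j \<and> x j < \<beta> j}"
    have Q: "Q = \<phi> ` PiE {1..d} A"
    proof -
      have nn: "0 \<le> (2 * real l + 1) / (2 * real M)" for l by simp
      have "Q = {x. (\<forall>j\<in>{1..d}. \<exists>l\<in>A j. x j = (2*real l+1)/(2*real (m j))) \<and> (\<forall>j. j\<notin>{1..d} \<longrightarrow> x j = 0)}"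
        unfolding Q_def centered_grid_def A_def m_def using nn by fastforce
      also have "\<dots> = \<phi> ` PiE {1..d} A" unfolding \<phi>_def by (rule grid_image(1)[OF m1])
      finally show ?thesis .
    qed
    have cardQ: "card Q = (\<Prod>j\<in>{1..d}. card (A j))"
    proof -
      have "card Q = card (PiE {1..d} A)" unfolding Q \<phi>_def by (rule card_image[OF grid_image(2)[OF m1]])
      also have "\<dots> = (\<Prod>j\<in>{1..d}. card (A j))" by (rule card_PiE) simp
      finally show ?thesis .
    qed
    have sumeq: "(\<Sum>x\<in>centered_grid d m. a x * (if (\<forall>j\<in>{1..d}. 0 \<le> x j \<and> x j < \<beta> j) then 1 else 0))
        = (\<Prod>j\<in>{1..d}. real (card (A j)) / real M)"
    proof -
      have "(\<Sum>x\<in>centered_grid d m. a x * (if (\<forall>j\<in>{1..d}. 0 \<le> x j \<and> x j < \<beta> j) then 1 else 0))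
          = (\<Sum>x\<in>Q. 1 / real M ^ d)"
      proof -
        have "(\<Sum>x\<in>centered_grid d m. a x * (if (\<forall>j\<in>{1..d}. 0 \<le> x j \<and> x j < \<beta> j) then 1 else 0))
           = (\<Sum>x\<in>centered_grid d m. if (\<forall>j\<in>{1..d}. 0 \<le> x j \<and> x j < \<beta> j) then 1 / real M ^ d else 0)"
          by (rule sum.cong) (auto simp: a_def)
        also have "\<dots> = (\<Sum>x\<in>Q. 1 / real M ^ d)" unfolding Q_def by (rule sum.inter_filter[OF finP, symmetric])
        finally show ?thesis .
      qed
      also have "\<dots> = real (card Q) / real M ^ d" by simp
      also have "\<dots> = (\<Prod>j\<in>{1..d}. real (card (A j))) / (\<Prod>j\<in>{1..d}. real M)"
        unfolding cardQ by simp
      also have "\<dots> = (\<Prod>j\<in>{1..d}. real (card (A j)) / real M)" by (rule prod_dividef[symmetric])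
      finally show ?thesis .
    qed
    have "\<bar>local_disc d (centered_grid d m) a \<beta>\<bar>
        = \<bar>(\<Prod>j\<in>{1..d}. real (card (A j)) / real M) - (\<Prod>j\<in>{1..d}. \<beta> j)\<bar>"
      unfolding local_disc_def sumeq ..
    also have "\<dots> \<le> (\<Sum>j\<in>{1..d}. \<bar>real (card (A j)) / real M - \<beta> j\<bar>)"
    proof (rule prod_diff_le)
      fix j assume j: "j \<in> {1..d}"
      have "A j \<subseteq> {..<M}" unfolding A_def by auto
      then have "card (A j) \<le> M" by (metis card_lessThan card_mono finite_lessThan)
      then show "0 \<le> real (card (A j)) / real M \<and> real (card (A j)) / real M \<le> 1"
        using Mpos by (simp add: field_simps)
    qed (use \<beta> in auto)
    also have "\<dots> \<le> (\<Sum>j\<in>{1..d}. 1 / (2 * real M))"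
      by (rule sum_mono) (use \<beta> M1 in \<open>auto simp: A_def intro: count_bound\<close>)
    also have "\<dots> = real d / (2 * real M)" by simp
    also have "\<dots> \<le> \<epsilon>" by (rule dM)
    finally have le: "\<bar>local_disc d (centered_grid d m) a \<beta>\<bar> \<le> \<epsilon>" .
    have "w u * \<bar>local_disc d (centered_grid d m) a \<beta>\<bar> \<le> 1 * \<bar>local_disc d (centered_grid d m) a \<beta>\<bar>"
      using w[OF u(2)] by (intro mult_right_mono) auto
    then show ?thesis using le unfolding \<beta>_def by simp
  qed
  define S where "S = {w u * \<bar>local_disc d (centered_grid d m) a (restr_one u \<alpha>)\<bar> | u \<alpha>.
            u \<noteq> {} \<and> u \<subseteq> {1..d} \<and> (\<forall>j\<in>{1..d}. 0 \<le> \<alpha> j \<and> \<alpha> j \<le> 1)}"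
  have "S \<noteq> {}"
  proof -
    have c: "{1::nat} \<noteq> {} \<and> {1::nat} \<subseteq> {1..d} \<and> (\<forall>j\<in>{1..d}. 0 \<le> (\<lambda>_. 0::real) j \<and> (\<lambda>_. 0::real) j \<le> 1)"
      using d by auto
    have "w {1} * \<bar>local_disc d (centered_grid d m) a (restr_one {1} (\<lambda>_. 0))\<bar> \<in> S"
      unfolding S_def using c by blast
    then show ?thesis by blast
  qed
  moreover have "x \<le> \<epsilon>" if "x \<in> S" for x
  proof -
    from that obtain u \<alpha> where "x = w u * \<bar>local_disc d (centered_grid d m) a (restr_one u \<alpha>)\<bar>"
      "u \<noteq> {}" "u \<subseteq> {1..d}" "\<forall>j\<in>{1..d}. 0 \<le> \<alpha> j \<and> \<alpha> j \<le> 1"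
      unfolding S_def by blast
    then show ?thesis using bound by simp
  qed
  ultimately have "Sup S \<le> \<epsilon>" by (rule cSup_least)
  then have "weighted_star_disc w d (centered_grid d m) a \<le> \<epsilon>"
    unfolding weighted_star_disc_def S_def .
  then show ?thesis using m1 by blast
qed


lemma gamma_le_1:
  fixes \<gamma> :: "nat \<Rightarrow> real"
  assumes "\<gamma> 1 \<le> 1" "\<And>j. j \<ge> 1 \<Longrightarrow> \<gamma> (Suc j) \<le> \<gamma> j"
  shows "j \<ge> 1 \<Longrightarrow> \<gamma> j \<le> 1"
proof (induction j rule: dec_induct[where i=1])
  case base then show ?case using assms(1) by simp
next
  case (step n) then show ?case using assms(2)[of n] by simp
qed

lemma pw_bounds:
  fixes \<gamma> :: "nat \<Rightarrow> real"
  assumes "\<And>j. j \<ge> 1 \<Longrightarrow> \<gamma> j \<le> 1" "\<And>j. j \<ge> 1 \<Longrightarrow> 0 \<le> \<gamma> j" "u \<subseteq> {1..d}"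
  shows "0 \<le> product_weights \<gamma> u \<and> product_weights \<gamma> u \<le> 1"
proof -
  have "\<And>j. j \<in> u \<Longrightarrow> 0 \<le> \<gamma> j \<and> \<gamma> j \<le> 1" using assms by auto
  then show ?thesis unfolding product_weights_def by (auto intro: prod_nonneg prod_le_1)
qed

lemma grid_lower:
  fixes \<gamma> :: "nat \<Rightarrow> real" and c \<epsilon> :: real
  assumes g1: "\<And>j. j \<ge> 1 \<Longrightarrow> \<gamma> j \<le> 1" and g0: "\<And>j. j \<ge> 1 \<Longrightarrow> 0 \<le> \<gamma> j"
    and gc: "\<And>j. j \<ge> 1 \<Longrightarrow> c \<le> \<gamma> j" and c: "c > 0" and eps: "\<epsilon> > 0"
    and m1: "\<forall>j\<in>{1..d}. 1 \<le> m j"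
    and disc: "weighted_star_disc (product_weights \<gamma>) d (centered_grid d m) a \<le> \<epsilon>"
    and j: "j \<in> {1..d}"
  shows "c / (2 * \<epsilon>) \<le> real (m j)"
proof -
  define P where "P = centered_grid d m"
  define S where "S = {product_weights \<gamma> u * \<bar>local_disc d P a (restr_one u \<alpha>)\<bar> | u \<alpha>.
            u \<noteq> {} \<and> u \<subseteq> {1..d} \<and> (\<forall>j\<in>{1..d}. 0 \<le> \<alpha> j \<and> \<alpha> j \<le> 1)}"
  have SupS: "Sup S \<le> \<epsilon>" using disc unfolding weighted_star_disc_def S_def P_def .
  have bdd: "bdd_above S"
  proof (rule bdd_aboveI)
    fix x assume "x \<in> S"
    then obtain u \<alpha> where x: "x = product_weights \<gamma> u * \<bar>local_disc d P a (restr_one u \<alpha>)\<bar>"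
      and u: "u \<subseteq> {1..d}" and \<alpha>: "\<forall>j\<in>{1..d}. 0 \<le> \<alpha> j \<and> \<alpha> j \<le> 1"
      unfolding S_def by blast
    have w: "0 \<le> product_weights \<gamma> u \<and> product_weights \<gamma> u \<le> 1" by (rule pw_bounds[of \<gamma> u d]) (use g1 g0 u in auto)
    define \<beta> where "\<beta> = restr_one u \<alpha>"
    have \<beta>: "0 \<le> \<beta> i \<and> \<beta> i \<le> 1" if "i \<in> {1..d}" for i
      using \<alpha> that by (auto simp: \<beta>_def restr_one_def)
    have pb: "\<bar>\<Prod>i\<in>{1..d}. \<beta> i\<bar> \<le> 1"
    proof -
      have "0 \<le> (\<Prod>i\<in>{1..d}. \<beta> i)" using \<beta> by (intro prod_nonneg) blast
      moreover have "(\<Prod>i\<in>{1..d}. \<beta> i) \<le> 1" using \<beta> by (intro prod_le_1) blast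
      ultimately show ?thesis by simp
    qed
    have sb: "\<bar>\<Sum>x\<in>P. a x * (if (\<forall>j\<in>{1..d}. 0 \<le> x j \<and> x j < \<beta> j) then 1 else 0)\<bar> \<le> (\<Sum>x\<in>P. \<bar>a x\<bar>)"
    proof -
      have "\<bar>\<Sum>x\<in>P. a x * (if (\<forall>j\<in>{1..d}. 0 \<le> x j \<and> x j < \<beta> j) then 1 else 0)\<bar>
          \<le> (\<Sum>x\<in>P. \<bar>a x * (if (\<forall>j\<in>{1..d}. 0 \<le> x j \<and> x j < \<beta> j) then 1 else 0)\<bar>)"
        by (rule sum_abs)
      also have "\<dots> \<le> (\<Sum>x\<in>P. \<bar>a x\<bar>)" by (rule sum_mono) simp
      finally show ?thesis .
    qed
    have "\<bar>local_disc d P a \<beta>\<bar> \<le> (\<Sum>x\<in>P. \<bar>a x\<bar>) + 1"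
      unfolding local_disc_def using sb pb by linarith
    moreover have "x \<le> \<bar>local_disc d P a \<beta>\<bar>"
      unfolding x \<beta>_def using w by (simp add: mult_left_le_one_le)
    ultimately show "x \<le> (\<Sum>x\<in>P. \<bar>a x\<bar>) + 1" by linarith
  qed
  have mj: "real (m j) \<ge> 1" using m1 j by simp
  define \<alpha> :: "nat \<Rightarrow> real" where "\<alpha> = (\<lambda>_. 1 / (2 * real (m j)))"
  have \<alpha>: "\<forall>i\<in>{1..d}. 0 \<le> \<alpha> i \<and> \<alpha> i \<le> 1" using mj by (simp add: \<alpha>_def field_simps)
  have zero: "(\<Sum>x\<in>P. a x * (if (\<forall>i\<in>{1..d}. 0 \<le> x i \<and> x i < restr_one {j} \<alpha> i) then 1 else 0)) = 0"
  proof (rule sum.neutral, rule ballI)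
    fix x assume "x \<in> P"
    then obtain l where "x j = (2 * real l + 1) / (2 * real (m j))"
      using j unfolding P_def centered_grid_def by blast
    moreover have "1 / (2 * real (m j)) \<le> (2 * real l + 1) / (2 * real (m j))"
      using mj by (intro divide_right_mono) auto
    ultimately have "\<not> x j < restr_one {j} \<alpha> j"
      by (simp add: restr_one_def \<alpha>_def)
    then show "a x * (if (\<forall>i\<in>{1..d}. 0 \<le> x i \<and> x i < restr_one {j} \<alpha> i) then 1 else 0) = 0"
      using j by auto
  qed
  have pr: "(\<Prod>i\<in>{1..d}. restr_one {j} \<alpha> i) = 1 / (2 * real (m j))"
  proof -
    have "(\<Prod>i\<in>{1..d}. restr_one {j} \<alpha> i) = (\<Prod>i\<in>{1..d}. if i = j then 1 / (2 * real (m j)) else 1)"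
      by (rule prod.cong) (auto simp: restr_one_def \<alpha>_def)
    also have "\<dots> = 1 / (2 * real (m j))" using j prod.delta[of "{1..d}" j "\<lambda>_. 1 / (2 * real (m j))"] by simp
    finally show ?thesis .
  qed
  have ld: "\<bar>local_disc d P a (restr_one {j} \<alpha>)\<bar> = 1 / (2 * real (m j))"
    unfolding local_disc_def zero pr by simp
  have "product_weights \<gamma> {j} * \<bar>local_disc d P a (restr_one {j} \<alpha>)\<bar> \<in> S"
    unfolding S_def using j \<alpha> by blast
  then have "product_weights \<gamma> {j} * \<bar>local_disc d P a (restr_one {j} \<alpha>)\<bar> \<le> Sup S"
    using bdd by (rule cSup_upper)
  then have "\<gamma> j * (1 / (2 * real (m j))) \<le> \<epsilon>" using SupS ld by (simp add: product_weights_def)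
  moreover have "c * (1 / (2 * real (m j))) \<le> \<gamma> j * (1 / (2 * real (m j)))"
    using gc[of j] j mj by (intro mult_right_mono) auto
  ultimately have "c / (2 * real (m j)) \<le> \<epsilon>" by simp
  then show ?thesis using mj eps by (simp add: field_simps)
qed


theorem lemma2:
  fixes \<gamma> :: "nat \<Rightarrow> real" and c :: real
  assumes "\<gamma> 1 \<le> 1"
    and "\<And>j. j \<ge> 1 \<Longrightarrow> \<gamma> (Suc j) \<le> \<gamma> j"
    and "\<And>j. j \<ge> 1 \<Longrightarrow> 0 \<le> \<gamma> j"
    and "c > 0"
    and "\<And>j. j \<ge> 1 \<Longrightarrow> c \<le> \<gamma> j"
  shows "(\<forall>\<epsilon> d. 0 < \<epsilon> \<and> \<epsilon> < 1 \<and> d \<ge> 1 \<longrightarrow>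
            real (N_grid (product_weights \<gamma>) \<epsilon> d) \<ge> (c / (4 * \<epsilon>)) ^ d)
         \<and> curse_of_dim (N_grid (product_weights \<gamma>))"
proof -
  have g1: "\<And>j. j \<ge> 1 \<Longrightarrow> \<gamma> j \<le> 1" using gamma_le_1[of \<gamma>] assms(1,2) by blast
  have main: "real (N_grid (product_weights \<gamma>) \<epsilon> d) \<ge> (c / (4 * \<epsilon>)) ^ d"
    if eps: "0 < \<epsilon>" and d: "d \<ge> 1" for \<epsilon> d
  proof -
    define NS where "NS = {N. \<exists>m. (\<forall>j\<in>{1..d}. 1 \<le> m j) \<and> N = (\<Prod>j\<in>{1..d}. m j) \<and>
         (\<exists>a. weighted_star_disc (product_weights \<gamma>) d (centered_grid d m) a \<le> \<epsilon>)}"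
    have "\<exists>m a. (\<forall>j\<in>{1..d}. 1 \<le> m j) \<and> weighted_star_disc (product_weights \<gamma>) d (centered_grid d m) a \<le> \<epsilon>"
    proof -
      have w: "0 \<le> product_weights \<gamma> u \<and> product_weights \<gamma> u \<le> 1" if "u \<subseteq> {1..d}" for u
        by (rule pw_bounds[of \<gamma> u d]) (use g1 assms(3) that in auto)
      show ?thesis by (rule grid_disc_small[OF d eps w])
    qed
    then have "NS \<noteq> {}" unfolding NS_def by blast
    then have "Inf NS \<in> NS" by (rule Inf_nat_def1)
    then obtain m a where m1: "\<forall>j\<in>{1..d}. 1 \<le> m j" and N: "Inf NS = (\<Prod>j\<in>{1..d}. m j)"
      and disc: "weighted_star_disc (product_weights \<gamma>) d (centered_grid d m) a \<le> \<epsilon>"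
      unfolding NS_def by blast
    have mj: "c / (2 * \<epsilon>) \<le> real (m j)" if "j \<in> {1..d}" for j
      by (rule grid_lower[of \<gamma> c \<epsilon> d m a j]) (use g1 assms(3,4,5) eps m1 disc that in auto)
    have "(c / (4 * \<epsilon>)) ^ d \<le> (c / (2 * \<epsilon>)) ^ d"
      using eps assms(4) by (intro power_mono) (auto simp: field_simps)
    also have "\<dots> = (\<Prod>j\<in>{1..d}. c / (2 * \<epsilon>))" by simp
    also have "\<dots> \<le> (\<Prod>j\<in>{1..d}. real (m j))"
      using mj eps assms(4) by (intro prod_mono) auto
    also have "\<dots> = real (N_grid (product_weights \<gamma>) \<epsilon> d)"
      unfolding N_grid_def NS_def[symmetric] N by simp
    finally show ?thesis .
  qed
  have key: "infinite {d::nat. d \<ge> 1 \<and> real (N_grid (product_weights \<gamma>) \<epsilon> d) \<ge> 1 * (1 + 1) ^ d}"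
    if e: "0 < \<epsilon> \<and> \<epsilon> < 1 \<and> \<epsilon> \<le> c / 8" for \<epsilon> :: real
  proof -
    have "{1..} \<subseteq> {d::nat. d \<ge> 1 \<and> real (N_grid (product_weights \<gamma>) \<epsilon> d) \<ge> 1 * (1 + 1) ^ d}"
    proof
      fix d :: nat assume "d \<in> {1..}"
      then have d: "d \<ge> 1" by simp
      have "(2::real) \<le> c / (4 * \<epsilon>)" using e by (simp add: field_simps)
      then have "(2::real) ^ d \<le> (c / (4 * \<epsilon>)) ^ d" by (intro power_mono) auto
      also have "\<dots> \<le> real (N_grid (product_weights \<gamma>) \<epsilon> d)" using main e d by blast
      finally show "d \<in> {d::nat. d \<ge> 1 \<and> real (N_grid (product_weights \<gamma>) \<epsilon> d) \<ge> 1 * (1 + 1) ^ d}"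
        using d by simp
    qed
    moreover have "infinite {1::nat..}" by (simp add: infinite_Ici)
    ultimately show ?thesis using finite_subset by blast
  qed
  have "curse_of_dim (N_grid (product_weights \<gamma>))"
    unfolding curse_of_dim_def
    by (rule exI[of _ "1::real"], rule exI[of _ "c/8"], rule exI[of _ "1::real"]) (use key assms(4) in auto)
  then show ?thesis using main by blast
qed

end
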